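(* Let $p(x)=\sum_{j=1}^k\frac{\pi_j}{\sigma^d(2\pi)^{d/2}}e^{-\|x-\mu_j\|^2/(2\sigma^2)}$ be a mixture of Gaussians $N(\mu_j,\sigma^2I)$ on $\mathbb{R}^d$ with weights $\pi_j>0$, $\sum_j\pi_j=1$, and let $X\sim p$. Let $\epsilon>0$ satisfy $$\epsilon\le\min_j\left(\frac{\pi_j^{1/d}}{\sqrt{2\pi}\,\sigma e^{16}}\right)^d$$ and suppose $$\min_{j\ne k}\|\mu_j-\mu_k\|>2\sigma\max_j\sqrt{2d\log\Big(\frac1{\sigma\sqrt{2\pi}}\Big)+2\log\Big(\frac1\epsilon\Big)-2\log\Big(\frac1{\pi_j}\Big)}.$$ Then $\mathbb{P}(p(X)<\epsilon)\le e^{-8d}$. *)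

theory Defs
  imports "HOL-Analysis.Analysis"
begin

definition gmm_density :: "nat \<Rightarrow> (nat \<Rightarrow> real) \<Rightarrow> (nat \<Rightarrow> 'a::euclidean_space) \<Rightarrow> real \<Rightarrow> 'a \<Rightarrow> real" where
  "gmm_density k w mu \<sigma> x =
     (\<Sum>j<k. w j / (\<sigma> ^ DIM('a) * (2 * pi) powr (real DIM('a) / 2))
              * exp (- (norm (x - mu j))\<^sup>2 / (2 * \<sigma>\<^sup>2)))"

end

theory Submission
  imports Defs "HOL-Probability.Distributions"
begin

lemma gauss1:
  assumes s: "s > 0"
  shows "(\<integral>\<^sup>+x. ennreal (exp (- x\<^sup>2 / (2 * s\<^sup>2))) \<partial>lborel) = ennreal (sqrt (2 * pi * s\<^sup>2))"
proof -
  have "(\<integral>\<^sup>+x. ennreal (normal_density 0 s x) \<partial>lborel) = 1"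
    using prob_space.emeasure_space_1[OF prob_space_normal_density[where \<mu>=0 and \<sigma>=s]] s
    by (subst (asm) emeasure_density) auto
  moreover have "\<And>x. ennreal (exp (- x\<^sup>2 / (2 * s\<^sup>2))) = ennreal (sqrt (2 * pi * s\<^sup>2)) * ennreal (normal_density 0 s x)"
    using s by (simp add: normal_density_def ennreal_mult[symmetric])
  ultimately show ?thesis
    by (simp add: nn_integral_cmult)
qed

lemma gaussE0:
  assumes s: "s > 0"
  shows "(\<integral>\<^sup>+x. ennreal (exp (- (norm (x::'a::euclidean_space))\<^sup>2 / (2 * s\<^sup>2))) \<partial>lborel) = ennreal ((2 * pi * s\<^sup>2) powr (real DIM('a) / 2))"
proof -
  have eq: "ennreal (exp (- (norm x)\<^sup>2 / (2 * s\<^sup>2))) = (\<Prod>b\<in>(Basis::'a set). ennreal (exp (- (x \<bullet> b)\<^sup>2 / (2 * s\<^sup>2))))" for x :: 'a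
  proof -
    have "(norm x)\<^sup>2 = (\<Sum>b\<in>(Basis::'a set). (x \<bullet> b)\<^sup>2)"
      by (subst power2_norm_eq_inner) (simp add: euclidean_inner[of x x] power2_eq_square)
    then have "exp (- (norm x)\<^sup>2 / (2 * s\<^sup>2)) = (\<Prod>b\<in>(Basis::'a set). exp (- (x \<bullet> b)\<^sup>2 / (2 * s\<^sup>2)))"
      by (simp add: exp_sum[symmetric] sum_divide_distrib[symmetric] sum_negf)
    then show ?thesis by (simp add: prod_ennreal)
  qed
  have "(\<integral>\<^sup>+x. ennreal (exp (- (norm (x::'a))\<^sup>2 / (2 * s\<^sup>2))) \<partial>lborel)
     = (\<integral>\<^sup>+x. (\<Prod>b\<in>(Basis::'a set). ennreal (exp (- ((x::'a) \<bullet> b)\<^sup>2 / (2 * s\<^sup>2)))) \<partial>lborel)"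
    by (rule nn_integral_cong) (rule eq)
  also have "\<dots> = (\<Prod>b\<in>(Basis::'a set). (\<integral>\<^sup>+x. ennreal (exp (- x\<^sup>2 / (2 * s\<^sup>2))) \<partial>lborel))"
    by (rule nn_integral_lborel_prod) auto
  also have "\<dots> = ennreal (sqrt (2 * pi * s\<^sup>2)) ^ DIM('a)"
    using gauss1[OF s] by simp
  also have "\<dots> = ennreal ((2 * pi * s\<^sup>2) powr (real DIM('a) / 2))"
  proof -
    have a: "2 * pi * s\<^sup>2 > 0" using s by simp
    have "sqrt (2 * pi * s\<^sup>2) ^ DIM('a) = ((2 * pi * s\<^sup>2) powr (1/2)) powr real DIM('a)"
      using a by (simp add: powr_half_sqrt powr_realpow)
    also have "\<dots> = (2 * pi * s\<^sup>2) powr (real DIM('a) / 2)"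
      by (simp add: powr_powr)
    finally show ?thesis by (simp add: ennreal_power)
  qed
  finally show ?thesis .
qed

lemma gaussE:
  fixes m :: "'a::euclidean_space"
  assumes s: "s > 0"
  shows "(\<integral>\<^sup>+x. ennreal (exp (- (norm (x - m))\<^sup>2 / (2 * s\<^sup>2))) \<partial>lborel) = ennreal ((2 * pi * s\<^sup>2) powr (real DIM('a) / 2))"
proof -
  have "(\<integral>\<^sup>+x. ennreal (exp (- (norm (x::'a))\<^sup>2 / (2 * s\<^sup>2))) \<partial>lborel)
      = (\<integral>\<^sup>+x. ennreal (exp (- (norm (x::'a))\<^sup>2 / (2 * s\<^sup>2))) \<partial>distr lborel borel ((+) (-m)))"
    by (simp add: lborel_distr_plus)
  also have "\<dots> = (\<integral>\<^sup>+x. ennreal (exp (- (norm (x - m))\<^sup>2 / (2 * s\<^sup>2))) \<partial>lborel)"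
    by (subst nn_integral_distr) auto
  finally show ?thesis using gaussE0[OF s, where 'a='a] by simp
qed

lemma gmm_meas[measurable]: "gmm_density k w mu \<sigma> \<in> borel_measurable borel"
proof -
  have "(\<lambda>x. gmm_density k w mu \<sigma> x) \<in> borel_measurable borel"
    unfolding gmm_density_def by measurable
  then show ?thesis by simp
qed

theorem lemma7:
  fixes k :: nat and w :: "nat \<Rightarrow> real" and mu :: "nat \<Rightarrow> 'a::euclidean_space"
    and \<sigma> \<epsilon> :: real
  defines "d \<equiv> DIM('a)"
  assumes sigma_pos: "\<sigma> > 0"
    and w_pos: "\<And>j. j < k \<Longrightarrow> w j > 0"
    and w_sum: "(\<Sum>j<k. w j) = 1"
    and eps_pos: "\<epsilon> > 0"
    and eps_le: "\<And>j. j < k \<Longrightarrow>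
        \<epsilon> \<le> (w j powr (1 / real d) / (sqrt (2 * pi) * \<sigma> * exp 16)) ^ d"
    and sep: "\<And>j l. j < k \<Longrightarrow> l < k \<Longrightarrow> j \<noteq> l \<Longrightarrow>
        dist (mu j) (mu l) > 2 * \<sigma> * (MAX i\<in>{..<k}.
           sqrt (2 * real d * ln (1 / (\<sigma> * sqrt (2 * pi))) + 2 * ln (1 / \<epsilon>)
                 - 2 * ln (1 / w i)))"
  shows "measure (density lborel (gmm_density k w mu \<sigma>))
           {x. gmm_density k w mu \<sigma> x < \<epsilon>} \<le> exp (- 8 * real d)"
proof -
  define g where "g = gmm_density k w mu \<sigma>"
  define A where "A = {x. g x < \<epsilon>}"
  define c where "c = 1 / (\<sigma> ^ d * (2 * pi) powr (real d / 2))"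
  have dpos: "d > 0" unfolding d_def by simp
  have cpos: "c > 0" unfolding c_def using sigma_pos by simp
  have g_eq: "g x = (\<Sum>j<k. w j * c * exp (- (norm (x - mu j))\<^sup>2 / (2 * \<sigma>\<^sup>2)))" for x
    unfolding g_def gmm_density_def c_def d_def by simp
  have sqrtpow: "sqrt a ^ d = a powr (real d / 2)" if "a > 0" for a
  proof -
    have "sqrt a ^ d = (a powr (1/2)) powr real d"
      using that by (simp add: powr_half_sqrt powr_realpow)
    also have "\<dots> = a powr (real d / 2)" by (simp add: powr_powr)
    finally show ?thesis .
  qed
  have eps_le2: "\<epsilon> \<le> w j * c * exp (- 16 * real d)" if j: "j < k" for j
  proof -
    have wj: "w j > 0" using w_pos j by simp
    have "(w j powr (1 / real d)) ^ d = w j"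
      using wj dpos by (simp add: powr_realpow[symmetric] powr_powr)
    moreover have "(exp 16) ^ d = exp (16 * real d)"
      by (simp add: exp_of_nat_mult[symmetric] mult.commute)
    moreover have "sqrt (2 * pi) ^ d = (2 * pi) powr (real d / 2)"
      by (rule sqrtpow) simp
    ultimately have "(w j powr (1 / real d) / (sqrt (2 * pi) * \<sigma> * exp 16)) ^ d
        = w j / ((2 * pi) powr (real d / 2) * \<sigma> ^ d * exp (16 * real d))"
      by (simp add: power_divide power_mult_distrib)
    also have "\<dots> = w j * c * exp (- 16 * real d)"
      unfolding c_def by (simp add: exp_minus field_simps)
    finally show ?thesis using eps_le[OF j] by simp
  qed
  define T where "T j x = w j * c * exp (- 12 * real d) * exp (- (norm (x - mu j))\<^sup>2 / (2 * (2 * \<sigma>)\<^sup>2))" for j x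
  have Tnn: "T j x \<ge> 0" if "j < k" for j x
    unfolding T_def using w_pos[OF that] cpos by simp
  have pointwise: "ennreal (g x) * indicator A x \<le> ennreal (\<Sum>j<k. T j x)" for x
  proof (cases "x \<in> A")
    case False then show ?thesis by simp
  next
    case True
    then have gx: "g x < \<epsilon>" unfolding A_def by simp
    have term_le: "w j * c * exp (- (norm (x - mu j))\<^sup>2 / (2 * \<sigma>\<^sup>2)) \<le> T j x" if j: "j < k" for j
    proof -
      have wj: "w j * c > 0" using w_pos[OF j] cpos by simp
      have "w j * c * exp (- (norm (x - mu j))\<^sup>2 / (2 * \<sigma>\<^sup>2)) \<le> g x"
        unfolding g_eq
        by (rule member_le_sum[where f="\<lambda>j. w j * c * exp (- (norm (x - mu j))\<^sup>2 / (2 * \<sigma>\<^sup>2))", of j "{..<k}"])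
           (use j w_pos cpos in \<open>auto intro!: mult_nonneg_nonneg less_imp_le\<close>)
      also have "\<dots> < w j * c * exp (- 16 * real d)" using gx eps_le2[OF j] by simp
      finally have "exp (- (norm (x - mu j))\<^sup>2 / (2 * \<sigma>\<^sup>2)) < exp (- 16 * real d)"
        using wj by (simp only: mult_less_cancel_left_pos)
      then have "(norm (x - mu j))\<^sup>2 / (2 * \<sigma>\<^sup>2) > 16 * real d" by simp
      then have r: "(norm (x - mu j))\<^sup>2 > 32 * real d * \<sigma>\<^sup>2"
        using sigma_pos by (simp add: field_simps)
      have "- (norm (x - mu j))\<^sup>2 / (2 * \<sigma>\<^sup>2) \<le> - 12 * real d + - (norm (x - mu j))\<^sup>2 / (2 * (2 * \<sigma>)\<^sup>2)"
        using r sigma_pos by (simp add: field_simps power2_eq_square)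
      then have "exp (- (norm (x - mu j))\<^sup>2 / (2 * \<sigma>\<^sup>2)) \<le> exp (- 12 * real d) * exp (- (norm (x - mu j))\<^sup>2 / (2 * (2 * \<sigma>)\<^sup>2))"
        by (metis exp_add exp_le_cancel_iff)
      then have "w j * c * exp (- (norm (x - mu j))\<^sup>2 / (2 * \<sigma>\<^sup>2)) \<le> w j * c * (exp (- 12 * real d) * exp (- (norm (x - mu j))\<^sup>2 / (2 * (2 * \<sigma>)\<^sup>2)))"
        using wj by (intro mult_left_mono) auto
      then show ?thesis unfolding T_def by (simp only: mult.assoc)
    qed
    have "g x \<le> (\<Sum>j<k. T j x)" unfolding g_eq by (rule sum_mono) (rule term_le, simp)
    then show ?thesis using True by (simp add: ennreal_leI)
  qed
  have Aset: "A \<in> sets borel" unfolding A_def g_def by measurable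
  have "emeasure (density lborel g) A = (\<integral>\<^sup>+x. ennreal (g x) * indicator A x \<partial>lborel)"
    using Aset unfolding g_def by (subst emeasure_density) auto
  also have "\<dots> \<le> (\<integral>\<^sup>+x. ennreal (\<Sum>j<k. T j x) \<partial>lborel)"
    by (rule nn_integral_mono) (rule pointwise)
  also have "\<dots> = (\<integral>\<^sup>+x. (\<Sum>j<k. ennreal (T j x)) \<partial>lborel)"
    by (rule nn_integral_cong) (rule sum_ennreal[symmetric], rule Tnn, simp)
  also have "\<dots> = (\<Sum>j<k. (\<integral>\<^sup>+x. ennreal (T j x) \<partial>lborel))"
    by (rule nn_integral_sum) (simp add: T_def)
  also have "\<dots> = (\<Sum>j<k. ennreal (w j * (2 ^ d * exp (- 12 * real d))))"
  proof (rule sum.cong[OF refl])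
    fix j assume "j \<in> {..<k}"
    then have j: "j < k" by simp
    have nn: "w j * c * exp (- 12 * real d) \<ge> 0" using w_pos[OF j] cpos by simp
    have "(\<integral>\<^sup>+x. ennreal (T j x) \<partial>lborel)
        = (\<integral>\<^sup>+x. ennreal (w j * c * exp (- 12 * real d)) * ennreal (exp (- (norm (x - mu j))\<^sup>2 / (2 * (2 * \<sigma>)\<^sup>2))) \<partial>lborel)"
      unfolding T_def using nn by (simp add: ennreal_mult)
    also have "\<dots> = ennreal (w j * c * exp (- 12 * real d)) * ennreal ((2 * pi * (2 * \<sigma>)\<^sup>2) powr (real d / 2))"
      using gaussE[of "2 * \<sigma>" "mu j"] sigma_pos unfolding d_def by (simp add: nn_integral_cmult)
    also have "\<dots> = ennreal (w j * c * exp (- 12 * real d) * (2 * pi * (2 * \<sigma>)\<^sup>2) powr (real d / 2))"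
      using nn by (simp add: ennreal_mult)
    also have "c * (2 * pi * (2 * \<sigma>)\<^sup>2) powr (real d / 2) = 2 ^ d"
    proof -
      have "(2 * pi * (2 * \<sigma>)\<^sup>2) powr (real d / 2) = sqrt (2 * pi * (2 * \<sigma>)\<^sup>2) ^ d"
        using sigma_pos by (simp add: sqrtpow)
      also have "\<dots> = (2 * \<sigma> * sqrt (2 * pi)) ^ d"
      proof -
        have "sqrt (2 * pi * (2 * \<sigma>)\<^sup>2) = sqrt ((2 * \<sigma>)\<^sup>2) * sqrt (2 * pi)"
          by (metis mult.commute real_sqrt_mult)
        also have "sqrt ((2 * \<sigma>)\<^sup>2) = 2 * \<sigma>" using sigma_pos by (simp only: real_sqrt_abs abs_of_pos mult_pos_pos zero_less_numeral)
        finally show ?thesis by simp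
      qed
      also have "\<dots> = 2 ^ d * \<sigma> ^ d * (2 * pi) powr (real d / 2)"
        by (simp add: power_mult_distrib sqrtpow)
      finally show ?thesis unfolding c_def using sigma_pos by simp
    qed
    then have "w j * c * exp (- 12 * real d) * (2 * pi * (2 * \<sigma>)\<^sup>2) powr (real d / 2) = w j * (2 ^ d * exp (- 12 * real d))"
      by (metis mult.commute mult.left_commute)
    finally show "(\<integral>\<^sup>+x. ennreal (T j x) \<partial>lborel) = ennreal (w j * (2 ^ d * exp (- 12 * real d)))" .
  qed
  also have "\<dots> = ennreal (\<Sum>j<k. w j * (2 ^ d * exp (- 12 * real d)))"
    using w_pos by (subst sum_ennreal) (auto intro!: mult_nonneg_nonneg less_imp_le)
  also have "\<dots> = ennreal (2 ^ d * exp (- 12 * real d))"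
    by (simp add: sum_distrib_right[symmetric] w_sum)
  also have "\<dots> \<le> ennreal (exp (- 8 * real d))"
  proof (rule ennreal_leI)
    have "(2::real) ^ d = exp (real d * ln 2)" by (simp add: exp_of_nat_mult)
    also have "\<dots> \<le> exp (4 * real d)" using ln_2_less_1 by (simp add: mult.commute mult_left_mono)
    finally have "(2::real) ^ d * exp (- 12 * real d) \<le> exp (4 * real d) * exp (- 12 * real d)" by simp
    also have "\<dots> = exp (- 8 * real d)" by (simp add: exp_add[symmetric])
    finally show "(2::real) ^ d * exp (- 12 * real d) \<le> exp (- 8 * real d)" .
  qed
  finally have "emeasure (density lborel g) A \<le> ennreal (exp (- 8 * real d))" .
  then have "measure (density lborel g) A \<le> exp (- 8 * real d)"
    unfolding measure_def by (rule enn2real_leI[rotated]) simp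
  then show ?thesis unfolding g_def A_def .
qed

end
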